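(* Let $(C^\gamma_{\alpha\beta},\eta,e)$ be a semisimple Frobenius manifold on $\mathcal U\subset\mathbb C^n$ with operators $L_\alpha=\partial/\partial x^\alpha-\hbar^{-1}C_\alpha(x)$, and let $A_1(x),\dots,A_m(x)$ be $Mat(n,\mathbb C)$-valued functions on $\mathcal U$ such that for all $\alpha$ the commutator $[\sum_{j=1}^m\hbar^{-j}A_j(x),L_\alpha]$ lies in $\hbar^{-1}Mat(n,\mathbb C)$ (i.e. is $\hbar^{-1}$ times a matrix-valued function of $x$). Then $\sum_{j=1}^m\hbar^{-j}A_j(x)=\varphi(b)_{\le-1}$ for some $b=\sum_{j=1}^mb_j\hbar^{-j}$ with $b_j$ diagonal-matrix-valued, and $b_j$ is constant for $j>1$.
   Context: Frobenius manifold in flat coordinates $x^\alpha$: analytic $C^\gamma_{\alpha\beta}(x)$, constant nondegenerate symmetric $\eta_{\alpha\beta}$, product $\partial_\alpha\circ\partial_\beta=\sum_\gamma C^\gamma_{\alpha\beta}\partial_\gamma$ commutative associative with unit $\partial/\partial x^1$, $\eta$ invariant, $(C_\alpha)^\gamma_\beta=C^\gamma_{\alpha\beta}$, and the $L_\alpha$ pairwise commute. Semisimple: $T_x\mathcal U=\oplus_i\theta_i$ with one-dimensional common eigenspaces of all multiplication operators. $\varphi(b)=TbT^{-1}$, where $T(\hbar,x)\in Mat(n,\mathbb C)[[\hbar]]$ is an invertible dressing transformation: $T^{-1}L_\alpha T=\partial/\partial x^\alpha+h_\alpha$ with $h_\alpha\in\hbar^{-1}Diag[[\hbar]]$ for all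 $\alpha$ ($Diag$ = diagonal matrices); such $T$ exists and is unique up to right multiplication by diagonal series. For a Laurent series $v=\sum_lv_l\hbar^l$, $v_{\le k}=\sum_{l\le k}v_l\hbar^l$. $[\partial_\alpha-\hbar^{-1}C_\alpha,M]=\partial_\alpha M-\hbar^{-1}[C_\alpha,M]$. *)

theory Defs
  imports "HOL-Analysis.Analysis"
begin

text \<open>Points of the chart domain U are vectors in complex^'n (flat coordinates x^alpha,
  indexed by the finite type 'n). Matrices are complex^'n^'n; entry M $ g $ b is M^g_b.\<close>

text \<open>Holomorphic scalar function on an open set: complex-Frechet differentiable.\<close>
definition holo_on :: "(complex^'n::finite) set \<Rightarrow> (complex^'n \<Rightarrow> complex) \<Rightarrow> bool" where
  "holo_on U g \<longleftrightarrow> (\<forall>x\<in>U. \<exists>L. (g has_derivative L) (at x) \<and>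
      (\<forall>v. L (\<chi> i. \<i> * v $ i) = \<i> * L v))"

definition mholo_on :: "(complex^'n::finite) set \<Rightarrow> (complex^'n \<Rightarrow> complex^'n^'n) \<Rightarrow> bool" where
  "mholo_on U M \<longleftrightarrow> (\<forall>i j. holo_on U (\<lambda>y. M y $ i $ j))"

definition pdc :: "'n::finite \<Rightarrow> (complex^'n \<Rightarrow> complex) \<Rightarrow> complex^'n \<Rightarrow> complex" where
  "pdc a g x = deriv (\<lambda>t. g (x + (\<chi> i. if i = a then t else 0))) 0"

definition pdm :: "'n::finite \<Rightarrow> (complex^'n \<Rightarrow> complex^'n^'n) \<Rightarrow> complex^'n \<Rightarrow> complex^'n^'n" where
  "pdm a M x = (\<chi> i j. pdc a (\<lambda>y. M y $ i $ j) x)"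

definition diagm :: "complex^'n::finite \<Rightarrow> complex^'n^'n" where
  "diagm v = (\<chi> i j. if i = j then v $ i else 0)"

definition is_diag :: "complex^'n::finite^'n \<Rightarrow> bool" where
  "is_diag M \<longleftrightarrow> (\<forall>i j. i \<noteq> j \<longrightarrow> M $ i $ j = 0)"

text \<open>Laurent series in hbar with x-dependent matrix coefficients:
  S k x is the coefficient of hbar^k at the point x.\<close>
type_synonym ('n) mser = "int \<Rightarrow> complex^'n \<Rightarrow> complex^'n^'n"

text \<open>Cauchy product (meaningful for series bounded below, where the index set is finite).\<close>
definition lmul :: "('n::finite) mser \<Rightarrow> 'n mser \<Rightarrow> 'n mser" where
  "lmul a b k x = (\<Sum>i\<in>{i. a i x \<noteq> 0 \<and> b (k - i) x \<noteq> 0}. a i x ** b (k - i) x)"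

definition lone :: "('n::finite) mser" where
  "lone k x = (if k = 0 then mat 1 else 0)"

definition pdser :: "'n::finite \<Rightarrow> 'n mser \<Rightarrow> 'n mser" where
  "pdser a S k = pdm a (S k)"

definition cser :: "('n::finite \<Rightarrow> complex^'n \<Rightarrow> complex^'n^'n) \<Rightarrow> 'n \<Rightarrow> 'n mser" where
  "cser C a k x = (if k = -1 then C a x else 0)"

text \<open>The series sum_{j=1}^m hbar^{-j} A_j(x).\<close>
definition negser :: "nat \<Rightarrow> (nat \<Rightarrow> complex^'n::finite \<Rightarrow> complex^'n^'n) \<Rightarrow> 'n mser" where
  "negser m A k x = (if - int m \<le> k \<and> k \<le> -1 then A (nat (- k)) x else 0)"

text \<open>Frobenius manifold in flat coordinates on U; C a x $ g $ b = C^g_{a b}(x),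
  the unit vector field is d/dx^e, eta is the constant metric.\<close>
definition frobenius :: "(complex^'n::finite) set \<Rightarrow> ('n \<Rightarrow> complex^'n \<Rightarrow> complex^'n^'n)
    \<Rightarrow> complex^'n^'n \<Rightarrow> 'n \<Rightarrow> bool" where
  "frobenius U C eta e \<longleftrightarrow>
     (\<forall>a. mholo_on U (C a)) \<and>
     invertible eta \<and> transpose eta = eta \<and>
     (\<forall>x\<in>U. \<forall>a b g. C a x $ g $ b = C b x $ g $ a) \<and>
     (\<forall>x\<in>U. \<forall>a b c t. (\<Sum>s\<in>UNIV. C a x $ s $ b * C s x $ t $ c)
                      = (\<Sum>s\<in>UNIV. C b x $ s $ c * C a x $ t $ s)) \<and>
     (\<forall>x\<in>U. \<forall>b g. C e x $ g $ b = (if g = b then 1 else 0)) \<and>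
     (\<forall>x\<in>U. \<forall>a b c. (\<Sum>s\<in>UNIV. C a x $ s $ b * eta $ s $ c)
                    = (\<Sum>s\<in>UNIV. C b x $ s $ c * eta $ a $ s))"

text \<open>[L_a, L_b] = 0 for L_a = d_a - hbar^{-1} C_a, written out coefficientwise in hbar:
  the hbar^{-1} part d_a C_b - d_b C_a and the hbar^{-2} part [C_a, C_b] vanish.\<close>
definition L_commute :: "(complex^'n::finite) set \<Rightarrow> ('n \<Rightarrow> complex^'n \<Rightarrow> complex^'n^'n) \<Rightarrow> bool" where
  "L_commute U C \<longleftrightarrow> (\<forall>x\<in>U. \<forall>a b.
      C a x ** C b x = C b x ** C a x \<and> pdm a (C b) x = pdm b (C a) x)"

text \<open>Semisimplicity: the tangent space is the direct sum of one-dimensional common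
  eigenspaces of all multiplication operators C_a(x).\<close>
definition semisimple :: "(complex^'n::finite) set \<Rightarrow> ('n \<Rightarrow> complex^'n \<Rightarrow> complex^'n^'n) \<Rightarrow> bool" where
  "semisimple U C \<longleftrightarrow> (\<forall>x\<in>U. \<exists>(P :: complex^'n^'n) lam. invertible P \<and>
      (\<forall>a. C a x ** P = P ** diagm (lam a)) \<and>
      (\<forall>i j. i \<noteq> j \<longrightarrow> (\<exists>a. lam a $ i \<noteq> lam a $ j)))"

text \<open>Dressing transformation: T in Mat[[hbar]] (holomorphic coefficients in x), invertible in
  Mat[[hbar]] with inverse Tinv, and T^{-1} L_a T = d_a + h_a with h_a in hbar^{-1} Diag[[hbar]].\<close>
definition dressing :: "(complex^'n::finite) set \<Rightarrow> ('n \<Rightarrow> complex^'n \<Rightarrow> complex^'n^'n)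
    \<Rightarrow> 'n mser \<Rightarrow> 'n mser \<Rightarrow> bool" where
  "dressing U C T Tinv \<longleftrightarrow>
     (\<forall>k x. k < 0 \<longrightarrow> T k x = 0 \<and> Tinv k x = 0) \<and>
     (\<forall>k. mholo_on U (T k)) \<and>
     (\<forall>k. \<forall>x\<in>U. lmul T Tinv k x = lone k x \<and> lmul Tinv T k x = lone k x) \<and>
     (\<forall>a. \<exists>h :: 'n mser. (\<forall>k x. k < -1 \<longrightarrow> h k x = 0) \<and> (\<forall>k. \<forall>x\<in>U. is_diag (h k x)) \<and>
        (\<forall>k. \<forall>x\<in>U. lmul Tinv (\<lambda>k' y. pdser a T k' y - lmul (cser C a) T k' y) k x = h k x))"

end

theory Submission
  imports Defs
begin

definition conv :: "(int \<Rightarrow> complex^'n::finite^'n) \<Rightarrow> (int \<Rightarrow> complex^'n^'n) \<Rightarrow> int \<Rightarrow> complex^'n^'n" where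
  "conv f g k = (\<Sum>i\<in>{i. f i \<noteq> 0 \<and> g (k - i) \<noteq> 0}. f i ** g (k - i))"

lemma matrix_add_rdistrib': "((B + C) ** A) = (B ** A) + (C ** A)" for A B C :: "complex^'n::finite^'n"
  by (vector matrix_matrix_mult_def sum.distrib[symmetric] field_simps)

lemma msum_left: "(\<Sum>i\<in>I. A i :: complex^'n::finite^'n) ** (B::complex^'n^'n) = (\<Sum>i\<in>I. A i ** B)"
proof (induction I rule: infinite_finite_induct)
  case (insert x F)
  then show ?case using matrix_add_rdistrib'[of "A x" "sum A F" B] by simp
qed simp_all

lemma msum_right: "(B::complex^'n::finite^'n) ** (\<Sum>i\<in>I. A i :: complex^'n^'n) = (\<Sum>i\<in>I. B ** A i)"
  by (induction I rule: infinite_finite_induct) (simp_all add: matrix_add_ldistrib)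

lemma conv_eq:
  assumes "\<forall>i<p. f i = 0" "\<forall>j<q. g j = 0" "finite I" "{p..k-q} \<subseteq> I"
  shows "conv f g k = (\<Sum>i\<in>I. f i ** g (k - i))"
  unfolding conv_def
proof (rule sum.mono_neutral_left)
  show "finite I" by fact
  show "{i. f i \<noteq> 0 \<and> g (k - i) \<noteq> 0} \<subseteq> I"
  proof
    fix i assume "i \<in> {i. f i \<noteq> 0 \<and> g (k - i) \<noteq> 0}"
    then have "\<not> i < p" "\<not> k - i < q" using assms(1,2) by auto
    then have "i \<in> {p..k-q}" by auto
    then show "i \<in> I" using assms(4) by blast
  qed
  show "\<forall>i\<in>I - {i. f i \<noteq> 0 \<and> g (k - i) \<noteq> 0}. f i ** g (k - i) = 0" by auto
qed

lemma conv_lb: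
  assumes "\<forall>i<p. f i = 0" "\<forall>j<q. g j = 0" "k < p + q"
  shows "conv f g k = 0"
proof -
  have "{i. f i \<noteq> 0 \<and> g (k - i) \<noteq> 0} = {}"
  proof (rule ccontr)
    assume "{i. f i \<noteq> 0 \<and> g (k - i) \<noteq> 0} \<noteq> {}"
    then obtain i where "f i \<noteq> 0" "g (k - i) \<noteq> 0" by auto
    then have "\<not> i < p" "\<not> k - i < q" using assms(1,2) by auto
    then show False using assms(3) by linarith
  qed
  then show ?thesis unfolding conv_def by (simp only: sum.empty)
qed

lemma conv_assoc:
  assumes f: "\<forall>i<p. f i = 0" and g: "\<forall>j<q. g j = 0" and h: "\<forall>j<r. h j = 0"
  shows "conv (conv f g) h k = conv f (conv g h) k"
proof -
  define I where "I = {p..k-q-r}"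
  define S where "S = {p+q..k-r}"
  have fg: "\<forall>s<p+q. conv f g s = 0" using conv_lb[OF f g] by blast
  have gh: "\<forall>s<q+r. conv g h s = 0" using conv_lb[OF g h] by blast
  have "conv (conv f g) h k = (\<Sum>s\<in>S. conv f g s ** h (k - s))"
    by (rule conv_eq[OF fg h]) (auto simp: S_def)
  also have "\<dots> = (\<Sum>s\<in>S. (\<Sum>i\<in>I. f i ** g (s - i)) ** h (k - s))"
    by (rule sum.cong[OF refl], subst conv_eq[OF f g, of I]) (auto simp: I_def S_def)
  also have "\<dots> = (\<Sum>s\<in>S. \<Sum>i\<in>I. f i ** g (s - i) ** h (k - s))"
    by (simp add: msum_left)
  also have "\<dots> = (\<Sum>i\<in>I. \<Sum>s\<in>S. f i ** g (s - i) ** h (k - s))"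
    by (rule sum.swap)
  also have "\<dots> = (\<Sum>i\<in>I. f i ** conv g h (k - i))"
  proof (rule sum.cong[OF refl])
    fix i assume i: "i \<in> I"
    have "conv g h (k - i) = (\<Sum>j\<in>(\<lambda>s. s - i) ` S. g j ** h (k - i - j))"
      by (rule conv_eq[OF g h]) (use i in \<open>auto simp: I_def S_def image_iff intro!: bexI[where x="_ + i"]\<close>)
    also have "\<dots> = (\<Sum>s\<in>S. g (s - i) ** h (k - s))"
      by (subst sum.reindex) (auto simp: inj_on_def)
    finally show "(\<Sum>s\<in>S. f i ** g (s - i) ** h (k - s)) = f i ** conv g h (k - i)"
      by (simp add: msum_right matrix_mul_assoc)
  qed
  also have "\<dots> = conv f (conv g h) k"
    by (rule conv_eq[OF f gh, symmetric]) (auto simp: I_def)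
  finally show ?thesis .
qed

typedef ('n::finite) ls = "{f :: int \<Rightarrow> complex^'n^'n. \<exists>p. \<forall>k<p. f k = 0}"
  morphisms cf Abs_ls by auto
setup_lifting type_definition_ls

lemma ls_lb: "\<exists>p. \<forall>k<p. cf a k = 0"
  using cf by auto

instantiation ls :: (finite) ring_1
begin
lift_definition zero_ls :: "'a ls" is "\<lambda>k. 0" by auto
lift_definition one_ls :: "'a ls" is "\<lambda>k. if k = 0 then mat 1 else 0" by (rule exI[of _ 0]) auto
lift_definition plus_ls :: "'a ls \<Rightarrow> 'a ls \<Rightarrow> 'a ls" is "\<lambda>f g k. f k + g k"
  by (metis (no_types) add.right_neutral min.strict_boundedE)
lift_definition minus_ls :: "'a ls \<Rightarrow> 'a ls \<Rightarrow> 'a ls" is "\<lambda>f g k. f k - g k"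
  by (metis (no_types) diff_zero min.strict_boundedE)
lift_definition uminus_ls :: "'a ls \<Rightarrow> 'a ls" is "\<lambda>f k. - f k" by auto
lift_definition times_ls :: "'a ls \<Rightarrow> 'a ls \<Rightarrow> 'a ls" is conv
  using conv_lb by blast
instance
proof
  fix a b c :: "'a ls"
  show "a * b * c = a * (b * c)"
    using ls_lb[of a] ls_lb[of b] ls_lb[of c]
    by transfer (auto simp: fun_eq_iff intro: conv_assoc)
  show "a + b + c = a + (b + c)" by transfer (simp add: algebra_simps)
  show "a + b = b + a" by transfer (simp add: algebra_simps)
  show "0 + a = a" by transfer simp
  show "- a + a = 0" by transfer simp
  show "a - b = a + - b" by transfer simp
  show "1 * a = a"
  proof (transfer, rule ext)
    fix f :: "int \<Rightarrow> complex^'a^'a" and k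
    show "conv (\<lambda>k. if k = 0 then mat 1 else 0) f k = f k"
    proof (cases "f k = 0")
      case True
      then have "{i. (if i = 0 then mat 1 else (0::complex^'a^'a)) \<noteq> 0 \<and> f (k - i) \<noteq> 0} = {}" by auto
      then show ?thesis using True unfolding conv_def by (simp only: sum.empty)
    next
      case False
      then have "{i. (if i = 0 then mat 1 else (0::complex^'a^'a)) \<noteq> 0 \<and> f (k - i) \<noteq> 0} = {0}"
        by (auto simp: mat_def vec_eq_iff)
      then show ?thesis by (simp add: conv_def)
    qed
  qed
  show "a * 1 = a"
  proof (transfer, rule ext)
    fix f :: "int \<Rightarrow> complex^'a^'a" and k
    show "conv f (\<lambda>k. if k = 0 then mat 1 else 0) k = f k"
    proof (cases "f k = 0")
      case True
      then have "{i. f i \<noteq> 0 \<and> (if k - i = 0 then mat 1 else (0::complex^'a^'a)) \<noteq> 0} = {}" by auto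
      then show ?thesis using True unfolding conv_def by (simp only: sum.empty)
    next
      case False
      then have "{i. f i \<noteq> 0 \<and> (if k - i = 0 then mat 1 else (0::complex^'a^'a)) \<noteq> 0} = {k}"
        by (auto simp: mat_def vec_eq_iff)
      then show ?thesis by (simp add: conv_def)
    qed
  qed
  show "(a + b) * c = a * c + b * c"
    using ls_lb[of a] ls_lb[of b] ls_lb[of c]
  proof transfer
    fix f g h :: "int \<Rightarrow> complex^'a^'a"
    assume "\<exists>p. \<forall>k<p. f k = 0" "\<exists>p. \<forall>k<p. g k = 0" "\<exists>p. \<forall>k<p. h k = 0"
    then obtain p q r where f: "\<forall>k<p. f k = 0" and g: "\<forall>k<q. g k = 0" and h: "\<forall>k<r. h k = 0" by blast
    define s where "s = min p q"
    have f': "\<forall>k<s. f k = 0" and g': "\<forall>k<s. g k = 0" and fg: "\<forall>k<s. f k + g k = 0"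
      using f g by (auto simp: s_def)
    show "conv (\<lambda>k. f k + g k) h = (\<lambda>k. conv f h k + conv g h k)"
    proof
      fix k
      show "conv (\<lambda>k. f k + g k) h k = conv f h k + conv g h k"
        by (simp add: conv_eq[OF fg h, of "{s..k-r}"] conv_eq[OF f' h, of "{s..k-r}"]
            conv_eq[OF g' h, of "{s..k-r}"] matrix_add_rdistrib' sum.distrib)
    qed
  qed
  show "a * (b + c) = a * b + a * c"
    using ls_lb[of a] ls_lb[of b] ls_lb[of c]
  proof transfer
    fix f g h :: "int \<Rightarrow> complex^'a^'a"
    assume "\<exists>p. \<forall>k<p. f k = 0" "\<exists>p. \<forall>k<p. g k = 0" "\<exists>p. \<forall>k<p. h k = 0"
    then obtain p q r where f: "\<forall>k<p. f k = 0" and g: "\<forall>k<q. g k = 0" and h: "\<forall>k<r. h k = 0" by blast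
    define s where "s = min q r"
    have g': "\<forall>k<s. g k = 0" and h': "\<forall>k<s. h k = 0" and gh: "\<forall>k<s. g k + h k = 0"
      using g h by (auto simp: s_def)
    show "conv f (\<lambda>k. g k + h k) = (\<lambda>k. conv f g k + conv f h k)"
    proof
      fix k
      show "conv f (\<lambda>k. g k + h k) k = conv f g k + conv f h k"
        by (simp add: conv_eq[OF f gh, of "{p..k-s}"] conv_eq[OF f g', of "{p..k-s}"]
            conv_eq[OF f h', of "{p..k-s}"] matrix_add_ldistrib sum.distrib)
    qed
  qed
  have m1: "mat 1 \<noteq> (0::complex^'a^'a)"
  proof
    assume "mat 1 = (0::complex^'a^'a)"
    then have "(mat 1::complex^'a^'a) $ undefined $ undefined = 0" by simp
    then show False by (simp add: mat_def)
  qed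
  show "(0::'a ls) \<noteq> 1"
  proof transfer
    show "(\<lambda>k. 0::complex^'a^'a) \<noteq> (\<lambda>k. if k = 0 then mat 1 else 0)"
    proof
      assume "(\<lambda>k. 0::complex^'a^'a) = (\<lambda>k. if k = 0 then mat 1 else 0)"
      from fun_cong[OF this, of 0] m1 show False by simp
    qed
  qed
qed
end

lemma cf_simps [simp]:
  "cf 0 k = 0" "cf 1 k = (if k = 0 then mat 1 else 0)" "cf (a + b) k = cf a k + cf b k"
  "cf (a - b) k = cf a k - cf b k" "cf (- a) k = - cf a k" "cf (a * b) k = conv (cf a) (cf b) k"
  by (transfer, simp)+

definition cplx :: "(complex^'n::finite \<Rightarrow> complex) \<Rightarrow> bool" where
  "cplx L \<longleftrightarrow> (\<forall>v. L (\<chi> i. \<i> * v $ i) = \<i> * L v)"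

lemma pdc_axis: "pdc a g x = deriv (\<lambda>t. g (x + axis a t)) 0"
  by (simp add: pdc_def axis_def)

lemma linear_axis: "linear (axis a :: complex \<Rightarrow> complex^'n::finite)"
  by (rule linearI) (auto simp: axis_def vec_eq_iff)

lemma bounded_linear_axis: "bounded_linear (axis a :: complex \<Rightarrow> complex^'n::finite)"
  using linear_axis linear_conv_bounded_linear by blast

lemma cplx_axis:
  fixes L :: "complex^'n::finite \<Rightarrow> complex"
  assumes "bounded_linear L" "cplx L"
  shows "L (axis a t) = t * L (axis a 1)"
proof -
  interpret L: bounded_linear L by fact
  have e: "axis a t = Re t *\<^sub>R axis a 1 + Im t *\<^sub>R (\<chi> i. \<i> * (axis a 1 :: complex^'n) $ i)"
    by (simp add: vec_eq_iff axis_def) (simp add: complex_eq_iff)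
  have c: "L (\<chi> i. \<i> * (axis a 1 :: complex^'n) $ i) = \<i> * L (axis a 1)"
    using assms(2) unfolding cplx_def by blast
  have tt: "of_real (Re t) + \<i> * of_real (Im t) = t"
    by (simp add: complex_eq_iff)
  have "L (axis a t) = Re t *\<^sub>R L (axis a 1) + Im t *\<^sub>R L (\<chi> i. \<i> * (axis a 1 :: complex^'n) $ i)"
    by (subst e) (simp only: L.add L.scaleR)
  also have "\<dots> = (of_real (Re t) + \<i> * of_real (Im t)) * L (axis a 1)"
    unfolding c by (simp add: scaleR_conv_of_real algebra_simps)
  also have "\<dots> = t * L (axis a 1)"
    unfolding tt ..
  finally show ?thesis .
qed

lemma hol_line:
  fixes g :: "complex^'n::finite \<Rightarrow> complex" and x :: "complex^'n"
  assumes d: "(g has_derivative L) (at x)" and c: "cplx L"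
  shows "((\<lambda>t. g (x + axis a t)) has_field_derivative L (axis a 1)) (at 0)"
proof -
  have bl: "bounded_linear L" using d has_derivative_bounded_linear by blast
  have d1: "((\<lambda>t. x + axis a t) has_derivative axis a) (at 0)"
  proof -
    have "((axis a :: complex \<Rightarrow> complex^'n) has_derivative axis a) (at 0)"
      by (rule bounded_linear_imp_has_derivative[OF bounded_linear_axis])
    from has_derivative_add[OF has_derivative_const this]
    show ?thesis by simp
  qed
  have d2: "(g has_derivative L) (at ((\<lambda>t. x + axis a t) 0))"
    using d by (simp add: axis_def zero_vec_def[symmetric])
  have "((g \<circ> (\<lambda>t. x + axis a t)) has_derivative (L \<circ> axis a)) (at 0)"
    by (rule diff_chain_at[OF d1 d2])
  then have "((\<lambda>t. g (x + axis a t)) has_derivative (\<lambda>h. L (axis a h))) (at 0)"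
    by (simp add: o_def)
  then show ?thesis
    unfolding has_field_derivative_def
  proof (rule has_derivative_eq_rhs)
    show "(\<lambda>h. L (axis a h)) = (*) (L (axis a 1))"
    proof
      fix h show "L (axis a h) = L (axis a 1) * h"
        using cplx_axis[OF bl c, of a h] by (simp only: mult.commute)
    qed
  qed
qed

lemma pdc_unique:
  "((\<lambda>t. g (x + axis a t)) has_field_derivative D) (at 0) \<Longrightarrow> pdc a g x = D"
  unfolding pdc_axis by (rule DERIV_imp_deriv)

lemma pdc_eqL: "(g has_derivative L) (at x) \<Longrightarrow> cplx L \<Longrightarrow> pdc a g x = L (axis a 1)"
  by (rule pdc_unique, rule hol_line)

lemma holo_onD: "holo_on U g \<Longrightarrow> x \<in> U \<Longrightarrow> \<exists>L. (g has_derivative L) (at x) \<and> cplx L"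
  unfolding holo_on_def cplx_def by blast

lemma holo_onI: "(\<And>x. x \<in> U \<Longrightarrow> \<exists>L. (g has_derivative L) (at x) \<and> cplx L) \<Longrightarrow> holo_on U g"
  unfolding holo_on_def cplx_def by blast

lemma pdc_has:
  assumes "holo_on U g" "x \<in> U"
  shows "((\<lambda>t. g (x + axis a t)) has_field_derivative pdc a g x) (at 0)"
proof -
  obtain L where "(g has_derivative L) (at x)" "cplx L" using holo_onD[OF assms] by blast
  then show ?thesis using hol_line pdc_eqL by metis
qed

lemma holo_const: "holo_on U (\<lambda>y. c)"
  by (rule holo_onI, rule exI[of _ "\<lambda>_. 0"]) (auto simp: cplx_def)

lemma holo_add: "holo_on U f \<Longrightarrow> holo_on U g \<Longrightarrow> holo_on U (\<lambda>y. f y + g y)"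
proof (rule holo_onI)
  fix x assume "holo_on U f" "holo_on U g" "x \<in> U"
  then obtain L1 L2 where "(f has_derivative L1) (at x)" "cplx L1" "(g has_derivative L2) (at x)" "cplx L2"
    using holo_onD by metis
  then show "\<exists>L. ((\<lambda>y. f y + g y) has_derivative L) (at x) \<and> cplx L"
    by (intro exI[of _ "\<lambda>h. L1 h + L2 h"]) (auto intro: has_derivative_add simp: cplx_def algebra_simps)
qed

lemma holo_diff: "holo_on U f \<Longrightarrow> holo_on U g \<Longrightarrow> holo_on U (\<lambda>y. f y - g y)"
proof (rule holo_onI)
  fix x assume "holo_on U f" "holo_on U g" "x \<in> U"
  then obtain L1 L2 where "(f has_derivative L1) (at x)" "cplx L1" "(g has_derivative L2) (at x)" "cplx L2"
    using holo_onD by metis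
  then show "\<exists>L. ((\<lambda>y. f y - g y) has_derivative L) (at x) \<and> cplx L"
    by (intro exI[of _ "\<lambda>h. L1 h - L2 h"]) (auto intro: has_derivative_diff simp: cplx_def algebra_simps)
qed

lemma holo_mult: "holo_on U f \<Longrightarrow> holo_on U g \<Longrightarrow> holo_on U (\<lambda>y. f y * g y)"
proof (rule holo_onI)
  fix x assume "holo_on U f" "holo_on U g" "x \<in> U"
  then obtain L1 L2 where "(f has_derivative L1) (at x)" "cplx L1" "(g has_derivative L2) (at x)" "cplx L2"
    using holo_onD by metis
  then show "\<exists>L. ((\<lambda>y. f y * g y) has_derivative L) (at x) \<and> cplx L"
  proof (intro exI conjI)
    show "((\<lambda>y. f y * g y) has_derivative (\<lambda>h. f x * L2 h + L1 h * g x)) (at x)"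
      by (rule has_derivative_mult) fact+
    show "cplx (\<lambda>h. f x * L2 h + L1 h * g x)"
      using \<open>cplx L1\<close> \<open>cplx L2\<close> by (simp add: cplx_def algebra_simps)
  qed
qed

lemma holo_inverse: "holo_on U f \<Longrightarrow> (\<forall>y\<in>U. f y \<noteq> 0) \<Longrightarrow> holo_on U (\<lambda>y. inverse (f y))"
proof (rule holo_onI)
  fix x assume "holo_on U f" "\<forall>y\<in>U. f y \<noteq> 0" "x \<in> U"
  then obtain L1 where "(f has_derivative L1) (at x)" "cplx L1" "f x \<noteq> 0"
    using holo_onD by metis
  then show "\<exists>L. ((\<lambda>y. inverse (f y)) has_derivative L) (at x) \<and> cplx L"
  proof (intro exI conjI)
    show "((\<lambda>y. inverse (f y)) has_derivative (\<lambda>h. - (inverse (f x) * L1 h * inverse (f x)))) (at x)"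
      by (rule Deriv.has_derivative_inverse) fact+
    show "cplx (\<lambda>h. - (inverse (f x) * L1 h * inverse (f x)))"
      using \<open>cplx L1\<close> by (simp add: cplx_def algebra_simps)
  qed
qed

lemma holo_sum: "finite S \<Longrightarrow> (\<forall>s\<in>S. holo_on U (f s)) \<Longrightarrow> holo_on U (\<lambda>y. \<Sum>s\<in>S. f s y)"
  by (induction S rule: finite_induct) (auto intro: holo_add holo_const)

lemma holo_prod: "finite S \<Longrightarrow> (\<forall>s\<in>S. holo_on U (f s)) \<Longrightarrow> holo_on U (\<lambda>y. \<Prod>s\<in>S. f s y)"
  by (induction S rule: finite_induct) (auto intro: holo_mult holo_const)

lemma holo_cong:
  assumes "open U" "holo_on U f" "\<forall>y\<in>U. f y = g y"
  shows "holo_on U g"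
proof (rule holo_onI)
  fix x assume x: "x \<in> U"
  then obtain L where L: "(f has_derivative L) (at x)" "cplx L" using holo_onD assms(2) by metis
  have "(g has_derivative L) (at x)"
    by (rule has_derivative_transform_within_open[OF L(1) assms(1) x]) (use assms(3) in auto)
  then show "\<exists>L. (g has_derivative L) (at x) \<and> cplx L" using L(2) by blast
qed

lemma eventually_line:
  fixes x :: "complex^'n::finite"
  assumes "open U" "x \<in> U"
  shows "eventually (\<lambda>t. x + axis a t \<in> U) (nhds 0)"
proof -
  have c: "continuous_on UNIV (\<lambda>t::complex. x + axis a t)"
    using bounded_linear_axis[of a] by (intro continuous_intros linear_continuous_on) auto
  have o: "open ((\<lambda>t. x + axis a t) -` U)"
    using continuous_on_open_vimage[OF open_UNIV, THEN iffD1, OF c] assms(1) by auto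
  have "0 \<in> (\<lambda>t. x + axis a t) -` U" using assms(2) by (simp add: axis_def zero_vec_def[symmetric])
  then show ?thesis using o eventually_nhds by blast
qed

lemma pdc_cong:
  assumes "open U" "x \<in> U" "\<forall>y\<in>U. f y = g y"
  shows "pdc a f x = pdc a g x"
  unfolding pdc_axis
  by (rule deriv_cong_ev) (use eventually_line[OF assms(1,2), of a] assms(3) in \<open>auto elim: eventually_mono\<close>)

lemma pdc_const: "pdc a (\<lambda>y. c) x = 0"
  by (rule pdc_unique) simp

lemma pdc_add:
  assumes "holo_on U f" "holo_on U g" "x \<in> U"
  shows "pdc a (\<lambda>y. f y + g y) x = pdc a f x + pdc a g x"
proof (rule pdc_unique)
  have f: "((\<lambda>t. f (x + axis a t)) has_field_derivative pdc a f x) (at 0)" by (rule pdc_has[OF assms(1,3)])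
  have g: "((\<lambda>t. g (x + axis a t)) has_field_derivative pdc a g x) (at 0)" by (rule pdc_has[OF assms(2,3)])
  show "((\<lambda>t. f (x + axis a t) + g (x + axis a t)) has_field_derivative pdc a f x + pdc a g x) (at 0)"
    by (rule DERIV_add[OF f g])
qed

lemma pdc_diff:
  assumes "holo_on U f" "holo_on U g" "x \<in> U"
  shows "pdc a (\<lambda>y. f y - g y) x = pdc a f x - pdc a g x"
proof (rule pdc_unique)
  have f: "((\<lambda>t. f (x + axis a t)) has_field_derivative pdc a f x) (at 0)" by (rule pdc_has[OF assms(1,3)])
  have g: "((\<lambda>t. g (x + axis a t)) has_field_derivative pdc a g x) (at 0)" by (rule pdc_has[OF assms(2,3)])
  show "((\<lambda>t. f (x + axis a t) - g (x + axis a t)) has_field_derivative pdc a f x - pdc a g x) (at 0)"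
    by (rule DERIV_diff[OF f g])
qed

lemma pdc_mult:
  assumes "holo_on U f" "holo_on U g" "x \<in> U"
  shows "pdc a (\<lambda>y. f y * g y) x = pdc a f x * g x + f x * pdc a g x"
proof (rule pdc_unique)
  have f: "((\<lambda>t. f (x + axis a t)) has_field_derivative pdc a f x) (at 0)" by (rule pdc_has[OF assms(1,3)])
  have g: "((\<lambda>t. g (x + axis a t)) has_field_derivative pdc a g x) (at 0)" by (rule pdc_has[OF assms(2,3)])
  have x0: "x + axis a 0 = x" by (simp add: axis_def zero_vec_def[symmetric])
  have "((\<lambda>t. f (x + axis a t) * g (x + axis a t)) has_field_derivative
      pdc a f x * g (x + axis a 0) + pdc a g x * f (x + axis a 0)) (at 0)"
    by (rule DERIV_mult[OF f g])
  then show "((\<lambda>t. f (x + axis a t) * g (x + axis a t)) has_field_derivative pdc a f x * g x + f x * pdc a g x) (at 0)"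
    unfolding x0 by (simp only: mult.commute[of "pdc a g x"])
qed

lemma pdc_sum:
  assumes "finite S" "\<forall>s\<in>S. holo_on U (f s)" "x \<in> U"
  shows "pdc a (\<lambda>y. \<Sum>s\<in>S. f s y) x = (\<Sum>s\<in>S. pdc a (f s) x)"
proof (rule pdc_unique)
  show "((\<lambda>t. \<Sum>s\<in>S. f s (x + axis a t)) has_field_derivative (\<Sum>s\<in>S. pdc a (f s) x)) (at 0)"
  proof (rule DERIV_sum)
    fix s assume "s \<in> S"
    then show "((\<lambda>t. f s (x + axis a t)) has_field_derivative pdc a (f s) x) (at 0)"
      using assms(2,3) by (intro pdc_has) auto
  qed
qed

lemma holo_zero_const:
  assumes "open U" "connected U" "holo_on U g" "\<forall>x\<in>U. \<forall>a. pdc a g x = 0"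
  shows "\<exists>c. \<forall>x\<in>U. g x = c"
proof -
  have D: "(g has_derivative (\<lambda>h. 0)) (at x within U)" if x: "x \<in> U" for x
  proof -
    obtain L where L: "(g has_derivative L) (at x)" "cplx L" using holo_onD assms(3) x by metis
    have bl: "bounded_linear L" using L(1) has_derivative_bounded_linear by blast
    interpret L: bounded_linear L by fact
    have "L v = 0" for v
    proof -
      have "v = (\<Sum>a\<in>UNIV. axis a (v $ a))"
        by (simp add: vec_eq_iff axis_def)
      then have "L v = L (\<Sum>a\<in>UNIV. axis a (v $ a))" by (rule arg_cong)
      also have "\<dots> = (\<Sum>a\<in>UNIV. L (axis a (v $ a)))" by (rule L.sum)
      also have "\<dots> = (\<Sum>a\<in>UNIV. v $ a * L (axis a 1))" by (rule sum.cong[OF refl]) (rule cplx_axis[OF bl L(2)])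
      also have "\<dots> = 0" using pdc_eqL[OF L] assms(4) x by simp
      finally show ?thesis .
    qed
    then have "L = (\<lambda>h. 0)" by auto
    then show ?thesis using L(1) has_derivative_at_withinI by blast
  qed
  have "continuous_on U g"
  proof (rule continuous_at_imp_continuous_on, rule ballI)
    fix x assume "x \<in> U"
    then obtain L where "(g has_derivative L) (at x)" using holo_onD assms(3) by metis
    then show "isCont g x" using has_derivative_continuous by blast
  qed
  then have "g constant_on U"
    using has_derivative_zero_connected_constant_on[OF assms(2,1) finite.emptyI] D by blast
  then show ?thesis unfolding constant_on_def by blast
qed

lemma mholo_entry: "mholo_on U M \<Longrightarrow> holo_on U (\<lambda>y. M y $ i $ j)"
  by (simp add: mholo_on_def)

lemma mholo_const: "mholo_on U (\<lambda>y. c)"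
  by (simp add: mholo_on_def holo_const)

lemma mholo_add: "mholo_on U M \<Longrightarrow> mholo_on U N \<Longrightarrow> mholo_on U (\<lambda>y. M y + N y)"
  by (simp add: mholo_on_def holo_add)

lemma mholo_diff: "mholo_on U M \<Longrightarrow> mholo_on U N \<Longrightarrow> mholo_on U (\<lambda>y. M y - N y)"
  by (simp add: mholo_on_def holo_diff)

lemma mholo_neg:
  assumes "mholo_on U M" shows "mholo_on U (\<lambda>y. - M y)"
  unfolding mholo_on_def
proof (intro allI)
  fix i j
  have "holo_on U (\<lambda>y. (0::complex) - M y $ i $ j)"
    by (rule holo_diff[OF holo_const mholo_entry[OF assms]])
  then show "holo_on U (\<lambda>y. (- M y) $ i $ j)" by simp
qed

lemma mmult_entry: "(A ** B) $ i $ j = (\<Sum>k\<in>UNIV. A $ i $ k * B $ k $ j)"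
  by (simp add: matrix_matrix_mult_def)

lemma mholo_mult: "mholo_on U M \<Longrightarrow> mholo_on U N \<Longrightarrow> mholo_on U (\<lambda>y. M y ** N y)"
  unfolding mholo_on_def mmult_entry by (auto intro!: holo_sum holo_mult)

lemma mholo_sum: "finite S \<Longrightarrow> (\<forall>s\<in>S. mholo_on U (M s)) \<Longrightarrow> mholo_on U (\<lambda>y. \<Sum>s\<in>S. M s y)"
  unfolding mholo_on_def by (auto intro!: holo_sum)

lemma mholo_cong: "open U \<Longrightarrow> mholo_on U M \<Longrightarrow> \<forall>y\<in>U. M y = N y \<Longrightarrow> mholo_on U N"
  unfolding mholo_on_def
proof (intro allI)
  fix i j assume "open U" "\<forall>i j. holo_on U (\<lambda>y. M y $ i $ j)" "\<forall>y\<in>U. M y = N y"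
  then show "holo_on U (\<lambda>y. N y $ i $ j)"
    using holo_cong[of U "\<lambda>y. M y $ i $ j" "\<lambda>y. N y $ i $ j"] by auto
qed

lemma pdm_cong: "open U \<Longrightarrow> x \<in> U \<Longrightarrow> \<forall>y\<in>U. M y = N y \<Longrightarrow> pdm a M x = pdm a N x"
  unfolding pdm_def by (auto simp: vec_eq_iff intro!: pdc_cong)

lemma pdm_const: "pdm a (\<lambda>y. c) x = 0"
  unfolding pdm_def by (simp add: pdc_const vec_eq_iff)

lemma pdm_add: "mholo_on U M \<Longrightarrow> mholo_on U N \<Longrightarrow> x \<in> U \<Longrightarrow>
    pdm a (\<lambda>y. M y + N y) x = pdm a M x + pdm a N x"
  unfolding pdm_def mholo_on_def by (simp add: vec_eq_iff) (intro allI pdc_add, auto)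

lemma pdm_diff: "mholo_on U M \<Longrightarrow> mholo_on U N \<Longrightarrow> x \<in> U \<Longrightarrow>
    pdm a (\<lambda>y. M y - N y) x = pdm a M x - pdm a N x"
  unfolding pdm_def mholo_on_def by (simp add: vec_eq_iff) (intro allI pdc_diff, auto)

lemma pdm_sum: "finite S \<Longrightarrow> (\<forall>s\<in>S. mholo_on U (M s)) \<Longrightarrow> x \<in> U \<Longrightarrow>
    pdm a (\<lambda>y. \<Sum>s\<in>S. M s y) x = (\<Sum>s\<in>S. pdm a (M s) x)"
  unfolding pdm_def mholo_on_def by (simp add: vec_eq_iff) (intro allI pdc_sum, auto)

lemma pdm_mult:
  assumes "mholo_on U M" "mholo_on U N" "x \<in> U"
  shows "pdm a (\<lambda>y. M y ** N y) x = pdm a M x ** N x + M x ** pdm a N x"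
proof -
  have "pdc a (\<lambda>y. (M y ** N y) $ i $ j) x = (pdm a M x ** N x + M x ** pdm a N x) $ i $ j" for i j
  proof -
    have "pdc a (\<lambda>y. (M y ** N y) $ i $ j) x = pdc a (\<lambda>y. \<Sum>k\<in>UNIV. M y $ i $ k * N y $ k $ j) x"
      by (simp add: mmult_entry)
    also have "\<dots> = (\<Sum>k\<in>UNIV. pdc a (\<lambda>y. M y $ i $ k * N y $ k $ j) x)"
      using assms by (intro pdc_sum) (auto intro!: holo_mult mholo_entry)
    also have "\<dots> = (\<Sum>k\<in>UNIV. pdc a (\<lambda>y. M y $ i $ k) x * N x $ k $ j + M x $ i $ k * pdc a (\<lambda>y. N y $ k $ j) x)"
      using assms by (intro sum.cong refl pdc_mult) (auto intro!: mholo_entry)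
    also have "\<dots> = (pdm a M x ** N x + M x ** pdm a N x) $ i $ j"
      by (simp add: mmult_entry pdm_def sum.distrib)
    finally show ?thesis .
  qed
  then show ?thesis unfolding pdm_def by (simp add: vec_eq_iff)
qed

lemma mholo_zero_const:
  assumes "open U" "connected U" "mholo_on U M" "\<forall>x\<in>U. \<forall>a. pdm a M x = 0"
  shows "\<exists>c. \<forall>x\<in>U. M x = c"
proof -
  have "\<forall>i j. \<exists>c. \<forall>x\<in>U. M x $ i $ j = c"
  proof (intro allI)
    fix i j
    show "\<exists>c. \<forall>x\<in>U. M x $ i $ j = c"
    proof (rule holo_zero_const[OF assms(1,2)])
      show "holo_on U (\<lambda>x. M x $ i $ j)" using assms(3) by (rule mholo_entry)
      show "\<forall>x\<in>U. \<forall>a. pdc a (\<lambda>x. M x $ i $ j) x = 0"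
      proof (intro ballI allI)
        fix x a assume "x \<in> U"
        then have "pdm a M x $ i $ j = 0" using assms(4) by simp
        then show "pdc a (\<lambda>x. M x $ i $ j) x = 0" by (simp add: pdm_def)
      qed
    qed
  qed
  then obtain c where c: "\<forall>i j. \<forall>x\<in>U. M x $ i $ j = c i j" by metis
  show ?thesis
    by (rule exI[of _ "\<chi> i j. c i j"]) (use c in \<open>simp add: vec_eq_iff\<close>)
qed

definition lbs :: "int \<Rightarrow> 'n::finite mser \<Rightarrow> bool" where
  "lbs p S \<longleftrightarrow> (\<forall>k<p. \<forall>y. S k y = 0)"

lemma lbsD: "lbs p S \<Longrightarrow> k < p \<Longrightarrow> S k y = 0"
  by (simp add: lbs_def)

lemma lbs_fun: "lbs p S \<Longrightarrow> k < p \<Longrightarrow> S k = (\<lambda>y. 0)"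
  by (auto simp: lbs_def)

lemma lbs_mono: "lbs p S \<Longrightarrow> q \<le> p \<Longrightarrow> lbs q S"
  by (simp add: lbs_def)

lemma lmul_conv: "lmul a b k y = conv (\<lambda>i. a i y) (\<lambda>i. b i y) k"
  by (simp add: lmul_def conv_def)

lemma lmul_fin:
  assumes "lbs p a" "lbs q b"
  shows "lmul a b k y = (\<Sum>i\<in>{p..k-q}. a i y ** b (k - i) y)"
  unfolding lmul_conv by (rule conv_eq) (use assms in \<open>auto simp: lbs_def\<close>)

lemma lbs_lmul: "lbs p a \<Longrightarrow> lbs q b \<Longrightarrow> lbs (p + q) (lmul a b)"
  unfolding lbs_def lmul_conv by (auto intro!: conv_lb)

lemma lmul_fun:
  assumes "lbs p a" "lbs q b"
  shows "lmul a b k = (\<lambda>y. \<Sum>i\<in>{p..k-q}. a i y ** b (k - i) y)"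
  using lmul_fin[OF assms] by auto

lemma mholo_lmul:
  assumes "lbs p a" "lbs q b" "\<forall>i. mholo_on U (a i)" "\<forall>i. mholo_on U (b i)"
  shows "mholo_on U (lmul a b k)"
  unfolding lmul_fun[OF assms(1,2)] using assms(3,4) by (auto intro!: mholo_sum mholo_mult)

lemma lbs_pdser: "lbs p a \<Longrightarrow> lbs p (pdser d a)"
  unfolding lbs_def pdser_def by (auto simp: pdm_def pdc_const vec_eq_iff)

lemma pdser_lmul:
  assumes "lbs p a" "lbs q b" "\<forall>i. mholo_on U (a i)" "\<forall>i. mholo_on U (b i)" "x \<in> U"
  shows "pdser d (lmul a b) k x = lmul (pdser d a) b k x + lmul a (pdser d b) k x"
proof -
  have "pdser d (lmul a b) k x = pdm d (\<lambda>y. \<Sum>i\<in>{p..k-q}. a i y ** b (k - i) y) x"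
    by (simp add: pdser_def lmul_fun[OF assms(1,2)])
  also have "\<dots> = (\<Sum>i\<in>{p..k-q}. pdm d (\<lambda>y. a i y ** b (k - i) y) x)"
    using assms by (intro pdm_sum) (auto intro!: mholo_mult)
  also have "\<dots> = (\<Sum>i\<in>{p..k-q}. pdm d (a i) x ** b (k - i) x + a i x ** pdm d (b (k - i)) x)"
    using assms by (intro sum.cong refl pdm_mult) auto
  also have "\<dots> = lmul (pdser d a) b k x + lmul a (pdser d b) k x"
    by (simp add: lmul_fin[OF lbs_pdser[OF assms(1)] assms(2)] lmul_fin[OF assms(1) lbs_pdser[OF assms(2)]]
        sum.distrib pdser_def)
  finally show ?thesis .
qed

definition FF :: "'n::finite mser \<Rightarrow> complex^'n \<Rightarrow> 'n ls" where
  "FF S x = Abs_ls (\<lambda>k. S k x)"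

lemma cf_FF: "lbs p S \<Longrightarrow> cf (FF S x) = (\<lambda>k. S k x)"
  unfolding FF_def by (rule Abs_ls_inverse) (auto simp: lbs_def)

lemma cf_FF_nth: "lbs p S \<Longrightarrow> cf (FF S x) k = S k x"
  by (simp add: cf_FF)

lemma ls_eqI: "(\<And>k. cf a k = cf b k) \<Longrightarrow> a = b"
  by (metis cf_inject ext)

lemma FF_lmul: "lbs p a \<Longrightarrow> lbs q b \<Longrightarrow> FF (lmul a b) x = FF a x * FF b x"
  by (rule ls_eqI) (simp add: cf_FF[OF lbs_lmul] cf_FF lmul_conv)

lemma FF_cong: "(\<And>k. S k x = S' k x) \<Longrightarrow> FF S x = FF S' x"
  by (simp add: FF_def)

lemma lbs_add: "lbs p a \<Longrightarrow> lbs p b \<Longrightarrow> lbs p (\<lambda>k y. a k y + b k y)"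
  by (simp add: lbs_def)

lemma lbs_diff: "lbs p a \<Longrightarrow> lbs p b \<Longrightarrow> lbs p (\<lambda>k y. a k y - b k y)"
  by (simp add: lbs_def)

lemma FF_add: "lbs p a \<Longrightarrow> lbs p b \<Longrightarrow> FF (\<lambda>k y. a k y + b k y) x = FF a x + FF b x"
  by (rule ls_eqI) (simp add: cf_FF[OF lbs_add] cf_FF)

lemma FF_diff: "lbs p a \<Longrightarrow> lbs p b \<Longrightarrow> FF (\<lambda>k y. a k y - b k y) x = FF a x - FF b x"
  by (rule ls_eqI) (simp add: cf_FF[OF lbs_diff] cf_FF)

lemma lbs_lone: "lbs 0 lone"
  by (simp add: lbs_def lone_def)

lemma FF_lone: "FF lone x = 1"
  by (rule ls_eqI) (simp add: cf_FF[OF lbs_lone] lone_def)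

lemma ls_mult_fin:
  assumes "\<forall>i<p. cf a i = 0" "\<forall>j<q. cf b j = 0"
  shows "cf (a * b) k = (\<Sum>i\<in>{p..k-q}. cf a i ** cf b (k - i))"
  by (simp add: conv_eq[OF assms])

lemma ls_mult_lb:
  assumes "\<forall>i<p. cf a i = 0" "\<forall>j<q. cf b j = 0" "k < p + q"
  shows "cf (a * b) k = 0"
  by (simp add: conv_lb[OF assms])

lemma mult_diag_right:
  assumes "is_diag D"
  shows "(Q ** D) $ r $ c = Q $ r $ c * D $ c $ c"
proof -
  have "(Q ** D) $ r $ c = (\<Sum>k\<in>UNIV. (if k = c then Q $ r $ c * D $ c $ c else 0))"
    unfolding mmult_entry by (rule sum.cong) (use assms in \<open>auto simp: is_diag_def\<close>)
  then show ?thesis by simp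
qed

lemma mult_diagm_left: "(diagm l ** Q) $ r $ c = l $ r * Q $ r $ c"
proof -
  have "(diagm l ** Q) $ r $ c = (\<Sum>k\<in>UNIV. (if k = r then l $ r * Q $ r $ c else 0))"
    unfolding mmult_entry by (rule sum.cong) (auto simp: diagm_def)
  then show ?thesis by simp
qed

lemma mult_diag_left:
  assumes "is_diag D"
  shows "(D ** Q) $ r $ c = D $ r $ r * Q $ r $ c"
proof -
  have "(D ** Q) $ r $ c = (\<Sum>k\<in>UNIV. (if k = r then D $ r $ r * Q $ r $ c else 0))"
    unfolding mmult_entry by (rule sum.cong) (use assms in \<open>auto simp: is_diag_def\<close>)
  then show ?thesis by simp
qed

lemma distinct_eig:
  fixes T0 Ti0 P :: "complex^'n::finite^'n" and Cx :: "'a \<Rightarrow> complex^'n^'n"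
  assumes TT: "T0 ** Ti0 = mat 1" "Ti0 ** T0 = mat 1"
    and Dd: "\<forall>a. is_diag (Ti0 ** Cx a ** T0)"
    and P: "invertible P" "\<forall>a. Cx a ** P = P ** diagm (lam a)"
    and sep: "\<forall>i j. i \<noteq> j \<longrightarrow> (\<exists>a. lam a $ i \<noteq> lam a $ j)"
    and ij: "i \<noteq> j"
  shows "\<exists>a. (Ti0 ** Cx a ** T0) $ i $ i \<noteq> (Ti0 ** Cx a ** T0) $ j $ j"
proof (rule ccontr)
  assume "\<not> ?thesis"
  then have eq: "\<forall>a. (Ti0 ** Cx a ** T0) $ i $ i = (Ti0 ** Cx a ** T0) $ j $ j" by blast
  define D where "D a = Ti0 ** Cx a ** T0" for a
  obtain Pi where Pi: "P ** Pi = mat 1" "Pi ** P = mat 1" using P(1) unfolding invertible_def by blast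
  define Q where "Q = Pi ** T0"
  have key: "Q ** D a = diagm (lam a) ** Q" for a
  proof -
    have "Q ** D a = Pi ** (T0 ** Ti0) ** Cx a ** T0"
      by (simp add: Q_def D_def matrix_mul_assoc)
    also have "\<dots> = Pi ** Cx a ** T0" by (simp add: TT)
    also have "Pi ** Cx a = Pi ** Cx a ** (P ** Pi)" by (simp add: Pi)
    also have "\<dots> = Pi ** (Cx a ** P) ** Pi" by (simp add: matrix_mul_assoc)
    also have "\<dots> = (Pi ** P) ** diagm (lam a) ** Pi" using P(2) by (simp add: matrix_mul_assoc)
    also have "\<dots> = diagm (lam a) ** Pi" by (simp add: Pi)
    finally show ?thesis by (simp add: Q_def matrix_mul_assoc)
  qed
  have ent: "Q $ r $ c * D a $ c $ c = lam a $ r * Q $ r $ c" for a r c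
    using arg_cong[OF key[of a], of "\<lambda>M. M $ r $ c"]
    by (simp add: mult_diag_right[OF Dd[rule_format, of a, folded D_def]] mult_diagm_left)
  have Qinj: "v = 0" if "Q *v v = 0" for v
  proof -
    have "(Ti0 ** P) ** Q = mat 1"
    proof -
      have "(Ti0 ** P) ** Q = Ti0 ** (P ** Pi) ** T0" by (simp add: Q_def matrix_mul_assoc)
      then show ?thesis by (simp add: Pi TT)
    qed
    then have "v = ((Ti0 ** P) ** Q) *v v" by simp
    also have "\<dots> = (Ti0 ** P) *v (Q *v v)" by (simp add: matrix_vector_mul_assoc)
    finally show ?thesis using that by simp
  qed
  have col: "\<exists>r. Q $ r $ c \<noteq> 0" for c
  proof (rule ccontr)
    assume "\<not> (\<exists>r. Q $ r $ c \<noteq> 0)"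
    then have "Q *v axis c 1 = 0"
    proof -
      assume "\<not> (\<exists>r. Q $ r $ c \<noteq> 0)"
      have "(Q *v axis c 1) $ r = (\<Sum>s\<in>UNIV. if s = c then Q $ r $ c else 0)" for r
      proof -
        have "(Q *v axis c 1) $ r = (\<Sum>s\<in>UNIV. Q $ r $ s * (if s = c then 1 else 0))"
          by (simp add: matrix_vector_mult_def axis_def)
        also have "\<dots> = (\<Sum>s\<in>UNIV. if s = c then Q $ r $ c else 0)"
          by (rule sum.cong) auto
        finally show ?thesis .
      qed
      then show ?thesis using \<open>\<not> (\<exists>r. Q $ r $ c \<noteq> 0)\<close> by (simp add: vec_eq_iff)
    qed
    then have "axis c (1::complex) = 0" by (rule Qinj)
    then show False by simp
  qed
  obtain r where r: "Q $ r $ i \<noteq> 0" using col by blast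
  have lr: "lam a $ r = D a $ i $ i" for a
    using ent[of r i a] r by (simp add: mult.commute)
  have uniq: "r' = r" if "Q $ r' $ i \<noteq> 0 \<or> Q $ r' $ j \<noteq> 0" for r'
  proof (rule ccontr)
    assume "r' \<noteq> r"
    then obtain a where a: "lam a $ r' \<noteq> lam a $ r" using sep by blast
    have "lam a $ r' = D a $ i $ i"
    proof (cases "Q $ r' $ i \<noteq> 0")
      case True then show ?thesis using ent[of r' i a] by (simp add: mult.commute)
    next
      case False
      then have "Q $ r' $ j \<noteq> 0" using that by blast
      then have "lam a $ r' = D a $ j $ j" using ent[of r' j a] by (simp add: mult.commute)
      then show ?thesis using eq by (simp add: D_def)
    qed
    then show False using a lr by simp
  qed
  obtain r'' where "Q $ r'' $ j \<noteq> 0" using col by blast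
  then have rj: "Q $ r $ j \<noteq> 0" using uniq by blast
  define v :: "complex^'n" where "v = (\<chi> s. if s = i then Q $ r $ j else if s = j then - Q $ r $ i else 0)"
  have "Q *v v = 0"
  proof -
    have "(Q *v v) $ r' = 0" for r'
    proof -
      have "(Q *v v) $ r' = (\<Sum>s\<in>UNIV. (if s = i then Q $ r' $ i * Q $ r $ j else 0)
                             + (if s = j then - Q $ r' $ j * Q $ r $ i else 0))"
        unfolding matrix_vector_mult_def v_def using ij by (auto intro!: sum.cong)
      also have "\<dots> = Q $ r' $ i * Q $ r $ j - Q $ r' $ j * Q $ r $ i"
        by (simp add: sum.distrib)
      also have "\<dots> = 0"
      proof (cases "r' = r")
        case True then show ?thesis by (simp add: mult.commute)
      next
        case False
        then have "Q $ r' $ i = 0" "Q $ r' $ j = 0" using uniq by blast+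
        then show ?thesis by simp
      qed
      finally show ?thesis .
    qed
    then show ?thesis by (simp add: vec_eq_iff)
  qed
  then have "v = 0" by (rule Qinj)
  then have "v $ i = 0" by simp
  then show False using rj by (simp add: v_def)
qed

lemma holo_det: "mholo_on U M \<Longrightarrow> holo_on U (\<lambda>y. det (M y))"
  unfolding det_def
  by (intro holo_sum holo_mult holo_const holo_prod ballI finite_permutations finite_UNIV)
     (auto intro: mholo_entry)

lemma mholo_Ti:
  fixes T Ti :: "'n::finite mser"
  assumes U: "open U" and lT: "lbs 0 T" and lTi: "lbs 0 Ti" and hT: "\<forall>k. mholo_on U (T k)"
    and inv: "\<forall>k. \<forall>x\<in>U. lmul T Ti k x = lone k x \<and> lmul Ti T k x = lone k x"
  shows "mholo_on U (Ti k)"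
proof -
  have TT: "T 0 y ** Ti 0 y = mat 1" "Ti 0 y ** T 0 y = mat 1" if "y \<in> U" for y
    using inv[rule_format, OF that, of 0] lmul_fin[OF lT lTi, of 0 y] lmul_fin[OF lTi lT, of 0 y]
    by (auto simp: lone_def)
  define cr where "cr A kk j = (\<chi> i l. if l = kk then (\<chi> i. (mat 1 :: complex^'n^'n) $ i $ j) $ i else A $ i $ l)"
    for A :: "complex^'n^'n" and kk j
  have h0: "mholo_on U (Ti 0)"
    unfolding mholo_on_def
  proof (intro allI)
    fix kk j
    have dnz: "det (T 0 y) \<noteq> 0" if "y \<in> U" for y
      using TT[OF that] invertible_det_nz unfolding invertible_def by blast
    have eqn: "Ti 0 y $ kk $ j = det (cr (T 0 y) kk j) * inverse (det (T 0 y))" if y: "y \<in> U" for y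
    proof -
      have "T 0 y *v (\<chi> k. Ti 0 y $ k $ j) = (\<chi> i. (mat 1 :: complex^'n^'n) $ i $ j)"
        using arg_cong[OF TT(1)[OF y], of "\<lambda>M. \<chi> i. M $ i $ j"]
        by (simp add: matrix_vector_mult_def mmult_entry)
      then have X: "(\<chi> k. Ti 0 y $ k $ j) = (\<chi> k. det (\<chi> i l. if l = k then (\<chi> i. (mat 1 :: complex^'n^'n) $ i $ j) $ i else T 0 y $ i $ l) / det (T 0 y))"
        by (rule cramer[OF dnz[OF y], THEN iffD1])
      have "Ti 0 y $ kk $ j = det (\<chi> i l. if l = kk then (\<chi> i. (mat 1 :: complex^'n^'n) $ i $ j) $ i else T 0 y $ i $ l) / det (T 0 y)"
        using arg_cong[OF X, of "\<lambda>v. v $ kk"] by (simp only: vec_lambda_beta)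
      then show ?thesis by (simp add: cr_def divide_inverse)
    qed
    have hc: "mholo_on U (\<lambda>y. cr (T 0 y) kk j)"
      unfolding mholo_on_def cr_def
    proof (intro allI)
      fix i l
      show "holo_on U (\<lambda>y. (\<chi> i l. if l = kk then (\<chi> i. (mat 1 :: complex^'n^'n) $ i $ j) $ i else T 0 y $ i $ l) $ i $ l)"
        using hT by (cases "l = kk") (simp_all add: holo_const mholo_on_def)
    qed
    have "holo_on U (\<lambda>y. det (cr (T 0 y) kk j) * inverse (det (T 0 y)))"
      by (intro holo_mult holo_det hc holo_inverse) (use hT dnz in auto)
    then show "holo_on U (\<lambda>y. Ti 0 y $ kk $ j)"
      by (rule holo_cong[OF U]) (use eqn in auto)
  qed
  have rec: "Ti (int n) y = - (\<Sum>i\<in>{0..int n - 1}. Ti i y ** T (int n - i) y) ** Ti 0 y"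
    if n: "n > 0" and y: "y \<in> U" for n y
  proof -
    have "(\<Sum>i\<in>{0..int n}. Ti i y ** T (int n - i) y) = 0"
      using inv[rule_format, OF y, of "int n"] lmul_fin[OF lTi lT, of "int n" y] n by (auto simp: lone_def)
    moreover have "{0..int n} = insert (int n) {0..int n - 1}" using n by auto
    ultimately have "Ti (int n) y ** T 0 y + (\<Sum>i\<in>{0..int n - 1}. Ti i y ** T (int n - i) y) = 0"
      by simp
    then have "Ti (int n) y ** T 0 y = - (\<Sum>i\<in>{0..int n - 1}. Ti i y ** T (int n - i) y)"
      by (simp add: eq_neg_iff_add_eq_0)
    then have "Ti (int n) y ** T 0 y ** Ti 0 y = - (\<Sum>i\<in>{0..int n - 1}. Ti i y ** T (int n - i) y) ** Ti 0 y"
      by simp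
    then show ?thesis by (simp add: TT[OF y] flip: matrix_mul_assoc)
  qed
  have "mholo_on U (Ti (int n))" for n
  proof (induction n rule: less_induct)
    case (less n)
    show ?case
    proof (cases "n = 0")
      case True then show ?thesis using h0 by simp
    next
      case False
      have "mholo_on U (\<lambda>y. - (\<Sum>i\<in>{0..int n - 1}. Ti i y ** T (int n - i) y) ** Ti 0 y)"
      proof (rule mholo_mult[OF mholo_neg[OF mholo_sum[OF finite_atLeastAtMost_int]] h0], rule ballI)
        fix i assume i: "i \<in> {0..int n - 1}"
        then have "nat i < n" "int (nat i) = i" by auto
        then have "mholo_on U (Ti (int (nat i)))" using less by blast
        then show "mholo_on U (\<lambda>y. Ti i y ** T (int n - i) y)"
          using \<open>int (nat i) = i\<close> hT by (auto intro: mholo_mult)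
      qed
      then show ?thesis
        by (rule mholo_cong[OF U]) (use rec False in auto)
    qed
  qed
  then show ?thesis
  proof (cases "k < 0")
    case True then show ?thesis using lbs_fun[OF lTi True] mholo_const by metis
  next
    case False then show ?thesis using \<open>\<And>n. mholo_on U (Ti (int n))\<close>[of "nat k"] by simp
  qed
qed

lemma ring_key:
  fixes t ti X c hh dT dTi dX dY dTiX Z :: "'a::ring_1"
  assumes r1: "ti*t = 1" and r1': "t*ti = 1" and r2: "ti*(dT - c*t) = hh" and r3: "dX - (c*X - X*c) = Z"
    and r4: "dY = dTiX*t + (ti*X)*dT" and r5: "dTiX = dTi*X + ti*dX" and r6: "dTi*t + ti*dT = 0"
  shows "dY = (ti*X*t)*hh - hh*(ti*X*t) + ti*Z*t"
proof -
  have a1: "t * (ti * z) = z" for z using r1' by (simp flip: mult.assoc)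
  have a2: "ti * (t * z) = z" for z using r1 by (simp flip: mult.assoc)
  have dT: "dT = c*t + t*hh"
  proof -
    have "t * hh = t * (ti * (dT - c*t))" using r2 by simp
    also have "\<dots> = dT - c*t" by (rule a1)
    finally show ?thesis by (simp add: algebra_simps)
  qed
  have dTi: "dTi = - (ti*dT*ti)"
  proof -
    have "dTi = dTi * (t * ti)" using r1' by simp
    also have "\<dots> = (dTi * t) * ti" by (simp add: mult.assoc)
    also have "dTi * t = - (ti * dT)" using r6 by (simp add: eq_neg_iff_add_eq_0)
    finally show ?thesis by (simp add: mult.assoc)
  qed
  have dX: "dX = Z + (c*X - X*c)" using r3 by (simp add: algebra_simps)
  show ?thesis
    unfolding r4 r5 dTi dX dT by (simp add: algebra_simps a1 a2)
qed

lemma lbs_negser: "lbs (- int m) (negser m A)"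
  by (simp add: lbs_def negser_def)

lemma negser_fun: "negser m A k = (if - int m \<le> k \<and> k \<le> -1 then A (nat (- k)) else (\<lambda>y. 0))"
  by (auto simp: negser_def)

lemma mholo_negser:
  assumes "\<forall>j\<in>{1..m}. mholo_on U (A j)"
  shows "mholo_on U (negser m A k)"
proof (cases "- int m \<le> k \<and> k \<le> -1")
  case True
  then have "nat (- k) \<in> {1..m}" by auto
  then show ?thesis using assms True by (simp add: negser_fun)
next
  case False
  then have "negser m A k = (\<lambda>y. 0)" unfolding negser_fun by (simp only: if_False)
  then show ?thesis by (simp add: mholo_const)
qed

lemma lbs_cser: "lbs (-1) (cser C a)"
  by (simp add: lbs_def cser_def)

lemma cf_lbs: "lbs p S \<Longrightarrow> \<forall>i<p. cf (FF S x) i = 0"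
  by (simp add: cf_FF lbs_def)

lemma sum_reflect:
  "(\<Sum>i\<in>{p..k-q}. f i (k - i)) = (\<Sum>j\<in>{q..k-p}. f (k - j) (j::int))"
  by (rule sum.reindex_bij_witness[of _ "\<lambda>j. k - j" "\<lambda>i. k - i"]) auto

lemma FF_zero: "(\<And>k. S k x = 0) \<Longrightarrow> FF S x = 0"
  by (rule ls_eqI) (simp add: FF_def Abs_ls_inverse)

lemma pdm_diag_zero:
  assumes "open U" "x \<in> U" "\<forall>y\<in>U. is_diag (M y)" "r \<noteq> s"
  shows "pdm a M x $ r $ s = 0"
proof -
  have "pdc a (\<lambda>y. M y $ r $ s) x = pdc a (\<lambda>y. 0) x"
    by (rule pdc_cong[OF assms(1,2)]) (use assms(3,4) in \<open>auto simp: is_diag_def\<close>)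
  then show ?thesis by (simp add: pdm_def pdc_const)
qed

lemma matrix_mul_rneg': "(A::complex^'n::finite^'n) ** (- B) = - (A ** B)"
  by (simp add: vec_eq_iff matrix_matrix_mult_def sum_negf)

theorem mainTheorem7:
  fixes U :: "(complex^'n) set"
    and C :: "'n \<Rightarrow> complex^'n \<Rightarrow> complex^'n^'n"
    and eta :: "complex^'n^'n" and e :: 'n
    and T Tinv :: "'n mser"
    and m :: nat and A :: "nat \<Rightarrow> complex^'n \<Rightarrow> complex^'n^'n"
  assumes "open U" and "connected U"
    and "frobenius U C eta e"
    and "L_commute U C"
    and "semisimple U C"
    and "dressing U C T Tinv"
    and "\<forall>j\<in>{1..m}. mholo_on U (A j)"
    and "\<forall>a. \<forall>k. k \<noteq> -1 \<longrightarrow> (\<forall>x\<in>U.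
           pdser a (negser m A) k x
             - (lmul (cser C a) (negser m A) k x - lmul (negser m A) (cser C a) k x) = 0)"
  shows "\<exists>b :: nat \<Rightarrow> complex^'n \<Rightarrow> complex^'n^'n.
           (\<forall>j\<in>{1..m}. \<forall>x\<in>U. is_diag (b j x)) \<and>
           (\<forall>k \<le> -1. \<forall>x\<in>U. negser m A k x = lmul (lmul T (negser m b)) Tinv k x) \<and>
           (\<forall>j. 1 < j \<and> j \<le> m \<longrightarrow> (\<exists>c. \<forall>x\<in>U. b j x = c))"
proof -
  note U = assms(1)
  note dr = assms(6)[unfolded dressing_def]
  have lT: "lbs 0 T" and lTi: "lbs 0 Tinv" using dr by (auto simp: lbs_def)
  have hT: "\<forall>k. mholo_on U (T k)" using dr by blast
  have inv: "\<forall>k. \<forall>x\<in>U. lmul T Tinv k x = lone k x \<and> lmul Tinv T k x = lone k x" using dr by blast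
  define G where "G a = (\<lambda>k' y. pdser a T k' y - lmul (cser C a) T k' y)" for a
  have "\<forall>a. \<exists>h :: 'n mser. (\<forall>k x. k < -1 \<longrightarrow> h k x = 0) \<and> (\<forall>k. \<forall>x\<in>U. is_diag (h k x)) \<and>
        (\<forall>k. \<forall>x\<in>U. lmul Tinv (G a) k x = h k x)"
    using dr unfolding G_def by blast
  then have "\<exists>H. \<forall>a. (\<forall>k x. k < -1 \<longrightarrow> H a k x = 0) \<and> (\<forall>k. \<forall>x\<in>U. is_diag (H a k x)) \<and>
        (\<forall>k. \<forall>x\<in>U. lmul Tinv (G a) k x = H a k x)"
    by (rule choice)
  then obtain H where H: "\<forall>a. (\<forall>k x. k < -1 \<longrightarrow> H a k x = 0) \<and> (\<forall>k. \<forall>x\<in>U. is_diag (H a k x)) \<and>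
        (\<forall>k. \<forall>x\<in>U. lmul Tinv (G a) k x = H a k x)" by blast
  have lH: "lbs (-1) (H a)" for a using H by (simp add: lbs_def)
  have dH: "\<forall>k. \<forall>x\<in>U. is_diag (H a k x)" for a using H by blast
  have eH: "\<forall>k. \<forall>x\<in>U. lmul Tinv (G a) k x = H a k x" for a using H by blast
  have hTi: "\<forall>k. mholo_on U (Tinv k)" using mholo_Ti[OF U lT lTi hT inv] by blast
  define X where "X = negser m A"
  have lX: "lbs (- int m) X" unfolding X_def by (rule lbs_negser)
  have hX: "\<forall>k. mholo_on U (X k)" unfolding X_def using assms(7) by (blast intro: mholo_negser)
  define TX where "TX = lmul Tinv X"
  have lTX: "lbs (- int m) TX" unfolding TX_def using lbs_lmul[OF lTi lX] by simp
  have hTX: "\<forall>k. mholo_on U (TX k)" unfolding TX_def using mholo_lmul[OF lTi lX] hTi hX by blast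
  define Y where "Y = lmul TX T"
  have lY: "lbs (- int m) Y" unfolding Y_def using lbs_lmul[OF lTX lT] by simp
  have hY: "\<forall>k. mholo_on U (Y k)" unfolding Y_def using mholo_lmul[OF lTX lT] hTX hT by blast
  have lG: "lbs (-1) (G a)" for a
    unfolding G_def
    by (rule lbs_diff[OF lbs_mono[OF lbs_pdser[OF lT]]]) (use lbs_lmul[OF lbs_cser lT] in simp_all)

  have E: "pdm a (Y k) x = cf (FF Y x * FF (H a) x - FF (H a) x * FF Y x) k"
    if x: "x \<in> U" and k: "k \<le> -2" for a x k
  proof -
    define Ca where "Ca = cser C a"
    have lCa: "lbs (-1) Ca" unfolding Ca_def by (rule lbs_cser)
    define D where "D = (\<lambda>k y. pdser a X k y - (lmul Ca X k y - lmul X Ca k y))"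
    have e1: "-1 + - int m = - int m - 1" and e2: "- int m + -1 = - int m - 1" by simp_all
    have lD1: "lbs (- int m - 1) (\<lambda>k y. lmul Ca X k y - lmul X Ca k y)"
      by (rule lbs_diff) (use lbs_lmul[OF lCa lX, unfolded e1] lbs_lmul[OF lX lCa, unfolded e2] in auto)
    have lpX: "lbs (- int m - 1) (pdser a X)"
      by (rule lbs_mono[OF lbs_pdser[OF lX]]) simp
    have lD: "lbs (- int m - 1) D" unfolding D_def by (rule lbs_diff[OF lpX lD1])
    define t where "t = FF T x"
    define ti where "ti = FF Tinv x"
    define X' where "X' = FF X x"
    define c where "c = FF Ca x"
    define hh where "hh = FF (H a) x"
    define dT where "dT = FF (pdser a T) x"
    define dTi where "dTi = FF (pdser a Tinv) x"
    define dX where "dX = FF (pdser a X) x"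
    define dY where "dY = FF (pdser a Y) x"
    define dTiX where "dTiX = FF (pdser a TX) x"
    define Z where "Z = FF D x"
    have r1: "ti * t = 1"
    proof -
      have "FF (lmul Tinv T) x = FF lone x" by (rule FF_cong) (use inv x in auto)
      then show ?thesis by (simp add: FF_lmul[OF lTi lT] FF_lone ti_def t_def)
    qed
    have r1': "t * ti = 1"
    proof -
      have "FF (lmul T Tinv) x = FF lone x" by (rule FF_cong) (use inv x in auto)
      then show ?thesis by (simp add: FF_lmul[OF lT lTi] FF_lone ti_def t_def)
    qed
    have r2: "ti * (dT - c * t) = hh"
    proof -
      have "FF (lmul Tinv (G a)) x = FF (H a) x" by (rule FF_cong) (use eH x in auto)
      moreover have "FF (G a) x = dT - c * t"
      proof -
        have lpT1: "lbs (-1) (pdser a T)" by (rule lbs_mono[OF lbs_pdser[OF lT]]) simp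
        have lCT: "lbs (-1) (lmul Ca T)" using lbs_lmul[OF lCa lT] by simp
        show ?thesis
          unfolding G_def Ca_def[symmetric] FF_diff[OF lpT1 lCT] FF_lmul[OF lCa lT] dT_def c_def t_def ..
      qed
      ultimately show ?thesis by (simp add: FF_lmul[OF lTi lG] ti_def hh_def)
    qed
    have r3: "dX - (c * X' - X' * c) = Z"
    proof -
      have "FF (\<lambda>k y. lmul Ca X k y - lmul X Ca k y) x = c * X' - X' * c"
        by (subst FF_diff[of "- int m - 1"]) (use lbs_lmul[OF lCa lX, unfolded e1] lbs_lmul[OF lX lCa, unfolded e2] in
            \<open>simp_all add: FF_lmul[OF lCa lX] FF_lmul[OF lX lCa] c_def X'_def\<close>)
      then show ?thesis unfolding Z_def D_def FF_diff[OF lpX lD1] dX_def by simp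
    qed
    have lpTX: "lbs (- int m) (pdser a TX)" by (rule lbs_pdser[OF lTX])
    have lpT: "lbs 0 (pdser a T)" by (rule lbs_pdser[OF lT])
    have lpTi: "lbs 0 (pdser a Tinv)" by (rule lbs_pdser[OF lTi])
    have FTX: "FF TX x = ti * X'" unfolding TX_def ti_def X'_def by (rule FF_lmul[OF lTi lX])
    have r4: "dY = dTiX * t + (ti * X') * dT"
    proof -
      have "FF (pdser a Y) x = FF (\<lambda>k y. lmul (pdser a TX) T k y + lmul TX (pdser a T) k y) x"
        unfolding Y_def by (rule FF_cong) (rule pdser_lmul[OF lTX lT hTX hT x])
      also have "\<dots> = FF (lmul (pdser a TX) T) x + FF (lmul TX (pdser a T)) x"
        by (rule FF_add) (use lbs_lmul[OF lpTX lT] lbs_lmul[OF lTX lpT] in simp_all)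
      also have "\<dots> = dTiX * t + (ti * X') * dT"
        unfolding FF_lmul[OF lpTX lT] FF_lmul[OF lTX lpT] FTX dTiX_def t_def dT_def ..
      finally show ?thesis unfolding dY_def .
    qed
    have r5: "dTiX = dTi * X' + ti * dX"
    proof -
      have "FF (pdser a TX) x = FF (\<lambda>k y. lmul (pdser a Tinv) X k y + lmul Tinv (pdser a X) k y) x"
        unfolding TX_def by (rule FF_cong) (rule pdser_lmul[OF lTi lX hTi hX x])
      also have "\<dots> = FF (lmul (pdser a Tinv) X) x + FF (lmul Tinv (pdser a X)) x"
        by (rule FF_add) (use lbs_lmul[OF lpTi lX] lbs_lmul[OF lTi lbs_pdser[OF lX]] in simp_all)
      also have "\<dots> = dTi * X' + ti * dX"
        by (simp add: FF_lmul[OF lpTi lX] FF_lmul[OF lTi lbs_pdser[OF lX]] dTi_def X'_def ti_def dX_def)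
      finally show ?thesis unfolding dTiX_def .
    qed
    have r6: "dTi * t + ti * dT = 0"
    proof -
      have z: "pdser a (lmul Tinv T) k x = 0" for k
      proof -
        have "pdm a (lmul Tinv T k) x = pdm a (\<lambda>y. if k = 0 then mat 1 else 0) x"
          by (rule pdm_cong[OF U x]) (use inv in \<open>auto simp: lone_def\<close>)
        then show ?thesis by (simp add: pdser_def pdm_const)
      qed
      have "FF (\<lambda>k y. lmul (pdser a Tinv) T k y + lmul Tinv (pdser a T) k y) x = 0"
        by (rule FF_zero) (use z pdser_lmul[OF lTi lT hTi hT x] in metis)
      moreover have "FF (\<lambda>k y. lmul (pdser a Tinv) T k y + lmul Tinv (pdser a T) k y) x
          = FF (lmul (pdser a Tinv) T) x + FF (lmul Tinv (pdser a T)) x"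
        by (rule FF_add) (use lbs_lmul[OF lpTi lT] lbs_lmul[OF lTi lpT] in simp_all)
      ultimately show ?thesis
        by (simp add: FF_lmul[OF lpTi lT] FF_lmul[OF lTi lpT] dTi_def t_def ti_def dT_def)
    qed
    have key: "dY = (ti*X'*t)*hh - hh*(ti*X'*t) + ti*Z*t"
      by (rule ring_key[OF r1 r1' r2 r3 r4 r5 r6])
    have y: "ti * X' * t = FF Y x"
      unfolding Y_def FF_lmul[OF lTX lT] FTX t_def ..
    have zlb: "\<forall>j < -1. cf Z j = 0"
    proof (intro allI impI)
      fix j :: int assume "j < -1"
      then have "D j x = 0" using assms(8) x unfolding D_def Ca_def X_def by auto
      then show "cf Z j = 0" by (simp add: Z_def cf_FF[OF lD])
    qed
    have tilb: "\<forall>j < 0. cf ti j = 0" unfolding ti_def by (rule cf_lbs[OF lTi])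
    have tlb: "\<forall>j < 0. cf t j = 0" unfolding t_def by (rule cf_lbs[OF lT])
    have "\<forall>j < 0 + -1. cf (ti * Z) j = 0" using ls_mult_lb[OF tilb zlb] by blast
    then have tz: "cf (ti * Z * t) k = 0" using ls_mult_lb[OF _ tlb, of "-1" "ti * Z" k] k by simp
    have "pdm a (Y k) x = cf dY k"
      by (simp add: dY_def cf_FF[OF lbs_pdser[OF lY]] pdser_def)
    also have "\<dots> = cf (FF Y x * FF (H a) x - FF (H a) x * FF Y x) k"
      using tz unfolding key y hh_def by simp
    finally show ?thesis .
  qed
  have E2: "pdm a (Y k) x $ r $ s = (\<Sum>l\<in>{- int m..k+1}. Y l x $ r $ s * (H a (k-l) x $ s $ s - H a (k-l) x $ r $ r))"
    if x: "x \<in> U" and k: "k \<le> -2" for a x k r s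
  proof -
    have cY: "\<forall>i < - int m. cf (FF Y x) i = 0" by (rule cf_lbs[OF lY])
    have cH: "\<forall>i < -1. cf (FF (H a) x) i = 0" by (rule cf_lbs[OF lH])
    have m1: "cf (FF Y x * FF (H a) x) k = (\<Sum>l\<in>{- int m..k+1}. Y l x ** H a (k-l) x)"
      using ls_mult_fin[OF cY cH, of k] by (simp add: cf_FF[OF lY] cf_FF[OF lH])
    have "cf (FF (H a) x * FF Y x) k = (\<Sum>i\<in>{-1..k - - int m}. H a i x ** Y (k-i) x)"
      using ls_mult_fin[OF cH cY, of k] by (simp add: cf_FF[OF lY] cf_FF[OF lH])
    also have "\<dots> = (\<Sum>l\<in>{- int m..k - -1}. H a (k-l) x ** Y l x)"
      by (rule sum_reflect[of "\<lambda>i j. H a i x ** Y j x"])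
    finally have m2: "cf (FF (H a) x * FF Y x) k = (\<Sum>l\<in>{- int m..k+1}. H a (k-l) x ** Y l x)" by simp
    have "pdm a (Y k) x = (\<Sum>l\<in>{- int m..k+1}. Y l x ** H a (k-l) x - H a (k-l) x ** Y l x)"
      using E[OF x k, of a] m1 m2 by (simp add: sum_subtractf)
    then have "pdm a (Y k) x $ r $ s = (\<Sum>l\<in>{- int m..k+1}. (Y l x ** H a (k-l) x) $ r $ s - (H a (k-l) x ** Y l x) $ r $ s)"
      by simp
    also have "\<dots> = (\<Sum>l\<in>{- int m..k+1}. Y l x $ r $ s * (H a (k-l) x $ s $ s - H a (k-l) x $ r $ r))"
    proof (rule sum.cong[OF refl])
      fix l
      have dd: "is_diag (H a (k-l) x)" using dH x by blast
      show "(Y l x ** H a (k-l) x) $ r $ s - (H a (k-l) x ** Y l x) $ r $ s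
          = Y l x $ r $ s * (H a (k-l) x $ s $ s - H a (k-l) x $ r $ r)"
        by (simp add: mult_diag_right[OF dd] mult_diag_left[OF dd] algebra_simps)
    qed
    finally show ?thesis .
  qed
  have sepH: "\<exists>a. H a (-1) x $ r $ r \<noteq> H a (-1) x $ s $ s" if x: "x \<in> U" and rs: "r \<noteq> s" for x r s
  proof -
    have Hm1: "H a (-1) x = - (Tinv 0 x ** C a x ** T 0 x)" for a
    proof -
      have "H a (-1) x = lmul Tinv (G a) (-1) x" using eH x by metis
      also have "\<dots> = Tinv 0 x ** G a (-1) x" by (simp add: lmul_fin[OF lTi lG])
      also have "G a (-1) x = - (C a x ** T 0 x)"
        unfolding G_def using lbsD[OF lbs_pdser[OF lT], of "-1" a x]
        by (simp add: lmul_fin[OF lbs_cser lT] cser_def)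
      finally show ?thesis by (simp add: matrix_mul_assoc matrix_mul_rneg')
    qed
    have TT: "T 0 x ** Tinv 0 x = mat 1" "Tinv 0 x ** T 0 x = mat 1"
      using inv x lmul_fin[OF lT lTi, of 0 x] lmul_fin[OF lTi lT, of 0 x] by (auto simp: lone_def)
    have dg: "\<forall>a. is_diag (Tinv 0 x ** C a x ** T 0 x)"
    proof
      fix a
      have "is_diag (H a (-1) x)" using dH x by blast
      then show "is_diag (Tinv 0 x ** C a x ** T 0 x)" unfolding Hm1 by (simp add: is_diag_def)
    qed
    have "\<exists>(P :: complex^'n^'n) lam. invertible P \<and> (\<forall>a. C a x ** P = P ** diagm (lam a)) \<and>
      (\<forall>i j. i \<noteq> j \<longrightarrow> (\<exists>a. lam a $ i \<noteq> lam a $ j))"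
      using assms(5)[unfolded semisimple_def] x by (rule bspec)
    then obtain P :: "complex^'n^'n" and lam where P: "invertible P" "\<forall>a. C a x ** P = P ** diagm (lam a)"
      "\<forall>i j. i \<noteq> j \<longrightarrow> (\<exists>a. lam a $ i \<noteq> lam a $ j)"
      by (elim exE conjE)
    obtain a where "(Tinv 0 x ** C a x ** T 0 x) $ r $ r \<noteq> (Tinv 0 x ** C a x ** T 0 x) $ s $ s"
      using distinct_eig[OF TT dg P rs] by blast
    then show ?thesis unfolding Hm1 by auto
  qed
  have zlow: "Y l x = 0" if "l < - int m" for l x using lbsD[OF lY that] .
  have diag_ind: "\<forall>l. l \<le> - int m - 1 + int n \<and> l \<le> -1 \<longrightarrow> (\<forall>x\<in>U. is_diag (Y l x))" for n
  proof (induction n)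
    case 0
    then show ?case using zlow by (auto simp: is_diag_def)
  next
    case (Suc n)
    define k where "k = - int m - 1 + int n"
    show ?case
    proof (intro allI impI ballI)
      fix l x assume l: "l \<le> - int m - 1 + int (Suc n) \<and> l \<le> -1" and x: "x \<in> U"
      show "is_diag (Y l x)"
      proof (cases "l \<le> k")
        case True then show ?thesis using Suc l x k_def by auto
      next
        case False
        then have lk: "l = k + 1" and kk: "k \<le> -2" using l k_def by auto
        have IH: "\<forall>l'\<le>k. \<forall>x\<in>U. is_diag (Y l' x)" using Suc kk k_def by auto
        show ?thesis unfolding is_diag_def
        proof (intro allI impI)
          fix r s :: 'n assume rs: "r \<noteq> s"
          obtain a where a: "H a (-1) x $ r $ r \<noteq> H a (-1) x $ s $ s" using sepH[OF x rs] by blast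
          have "pdm a (Y k) x $ r $ s = 0"
            by (rule pdm_diag_zero[OF U x _ rs]) (use IH in auto)
          moreover have "pdm a (Y k) x $ r $ s = Y (k+1) x $ r $ s * (H a (-1) x $ s $ s - H a (-1) x $ r $ r)"
          proof -
            have "{- int m..k+1} = insert (k+1) {- int m..k}" using k_def by auto
            moreover have "(\<Sum>l\<in>{- int m..k}. Y l x $ r $ s * (H a (k-l) x $ s $ s - H a (k-l) x $ r $ r)) = 0"
              using IH x rs by (auto simp: is_diag_def intro!: sum.neutral)
            ultimately show ?thesis using E2[OF x kk, of a r s] by simp
          qed
          ultimately have "Y (k+1) x $ r $ s * (H a (-1) x $ s $ s - H a (-1) x $ r $ r) = 0" by simp
          then show "Y l x $ r $ s = 0" using a lk by simp
        qed
      qed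
    qed
  qed
  have diagY: "\<forall>x\<in>U. is_diag (Y l x)" if "l \<le> -1" for l
    using diag_ind[of m] that by auto
  have constY: "\<exists>c. \<forall>x\<in>U. Y k x = c" if k: "k \<le> -2" for k
  proof (rule mholo_zero_const[OF U assms(2)])
    show "mholo_on U (Y k)" using hY by blast
    show "\<forall>x\<in>U. \<forall>a. pdm a (Y k) x = 0"
    proof (intro ballI allI)
      fix x a assume x: "x \<in> U"
      have "pdm a (Y k) x $ r $ s = 0" for r s
      proof (cases "r = s")
        case True then show ?thesis using E2[OF x k, of a r s] by simp
      next
        case False
        show ?thesis by (rule pdm_diag_zero[OF U x _ False]) (use diagY k in auto)
      qed
      then show "pdm a (Y k) x = 0" by (simp add: vec_eq_iff)
    qed
  qed
  define b where "b j = Y (- int j)" for j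
  show ?thesis
  proof (intro exI[of _ b] conjI)
    show "\<forall>j\<in>{1..m}. \<forall>x\<in>U. is_diag (b j x)" unfolding b_def using diagY by auto
    show "\<forall>j. 1 < j \<and> j \<le> m \<longrightarrow> (\<exists>c. \<forall>x\<in>U. b j x = c)" unfolding b_def using constY by auto
    show "\<forall>k \<le> -1. \<forall>x\<in>U. negser m A k x = lmul (lmul T (negser m b)) Tinv k x"
    proof (intro allI impI ballI)
      fix k :: int and x assume k: "k \<le> -1" and x: "x \<in> U"
      define t where "t = FF T x"
      define ti where "ti = FF Tinv x"
      define X' where "X' = FF X x"
      define yl where "yl = FF (negser m b) x"
      have lb: "lbs (- int m) (negser m b)" by (rule lbs_negser)
      have r1: "ti * t = 1"
      proof -
        have "FF (lmul Tinv T) x = FF lone x" by (rule FF_cong) (use inv x in auto)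
        then show ?thesis by (simp add: FF_lmul[OF lTi lT] FF_lone ti_def t_def)
      qed
      have r1': "t * ti = 1"
      proof -
        have "FF (lmul T Tinv) x = FF lone x" by (rule FF_cong) (use inv x in auto)
        then show ?thesis by (simp add: FF_lmul[OF lT lTi] FF_lone ti_def t_def)
      qed
      have FTX: "FF TX x = ti * X'" unfolding TX_def ti_def X'_def by (rule FF_lmul[OF lTi lX])
      have y: "ti * X' * t = FF Y x"
        unfolding Y_def FF_lmul[OF lTX lT] FTX t_def ..
      have "X' = (t * ti) * X' * (t * ti)" using r1' by simp
      also have "\<dots> = t * (ti * X' * t) * ti" by (simp add: mult.assoc)
      also have "\<dots> = t * (yl + (FF Y x - yl)) * ti" using y by simp
      also have "\<dots> = t * yl * ti + t * (FF Y x - yl) * ti" by (simp add: algebra_simps)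
      finally have Xd: "X' = t * yl * ti + t * (FF Y x - yl) * ti" .
      have yh: "\<forall>j < 0. cf (FF Y x - yl) j = 0"
      proof (intro allI impI)
        fix j :: int assume j: "j < 0"
        show "cf (FF Y x - yl) j = 0"
        proof (cases "j < - int m")
          case True then show ?thesis
            by (simp add: yl_def cf_FF[OF lY] cf_FF[OF lb] zlow negser_def)
        next
          case False then show ?thesis using j
            by (simp add: yl_def cf_FF[OF lY] cf_FF[OF lb] negser_def b_def)
        qed
      qed
      have tlb: "\<forall>j < 0. cf t j = 0" unfolding t_def by (rule cf_lbs[OF lT])
      have tilb: "\<forall>j < 0. cf ti j = 0" unfolding ti_def by (rule cf_lbs[OF lTi])
      have "\<forall>j < 0 + 0. cf (t * (FF Y x - yl)) j = 0" using ls_mult_lb[OF tlb yh] by blast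
      then have "cf (t * (FF Y x - yl) * ti) k = 0" using ls_mult_lb[OF _ tilb, of 0 _ k] k by simp
      then have "cf X' k = cf (t * yl * ti) k" unfolding Xd by simp
      moreover have "cf X' k = X k x" unfolding X'_def by (rule cf_FF_nth[OF lX])
      moreover have "X k x = negser m A k x" by (simp add: X_def)
      moreover have "t * yl * ti = FF (lmul (lmul T (negser m b)) Tinv) x"
        using lbs_lmul[OF lT lb] by (simp add: FF_lmul[OF _ lTi] FF_lmul[OF lT lb] t_def yl_def ti_def)
      moreover have "cf (FF (lmul (lmul T (negser m b)) Tinv) x) k = lmul (lmul T (negser m b)) Tinv k x"
        by (rule cf_FF_nth[OF lbs_lmul[OF lbs_lmul[OF lT lb] lTi]])
      ultimately show "negser m A k x = lmul (lmul T (negser m b)) Tinv k x" by simp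
    qed
  qed
qed

end
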